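(* Let $(X,\tau,\mathcal{I})$ be an ideal topological space such that $(X,\tau)$ is semi-Alexandroff, $(X,\tau,\mathcal{I})$ is a $T_{\mathcal{I}}$-space, and $\mathcal{I}$ is a $\tau$-boundary. Then $\mathcal{I}$ is completely codense.
   Context: An ideal on a topological space $(X,\tau)$ is a nonempty collection $\mathcal{I}$ of subsets of $X$ closed under taking subsets and finite unions; $(X,\tau,\mathcal{I})$ is then called an ideal topological space. $(X,\tau,\mathcal{I})$ is a $T_{\mathcal{I}}$-space if for every $I\in\mathcal{I}$ and every $x\in X\setminus I$ there is a set $A_x\subseteq X$ with $x\in A_x$, $A_x\cap I=\emptyset$, and $A_x$ either open or closed. A set is semi-open if it lies between an open set and the closure of that open set. $(X,\tau)$ is semi-Alexandroff if every intersection of open sets is semi-open. $\mathcal{I}$ is a $\tau$-boundary if $\tau\cap\mathcal{I}=\{\emptyset\}$. A set $A$ is preopen if $A\subseteq \mathrm{Int}\,\overline{A}$; $\mathcal{I}$ is completely codense if the only preopen set belonging to $\mathcal{I}$ is $\emptyset$ (equivalently, every member of $\mathcal{I}$ is nowhere dense). *)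

theory Defs
  imports "HOL-Analysis.Analysis"
begin

definition is_ideal_on :: "'a topology \<Rightarrow> 'a set set \<Rightarrow> bool" where
  "is_ideal_on T \<I> \<longleftrightarrow> \<I> \<noteq> {} \<and> (\<forall>A\<in>\<I>. A \<subseteq> topspace T) \<and>
     (\<forall>A B. A \<in> \<I> \<and> B \<subseteq> A \<longrightarrow> B \<in> \<I>) \<and>
     (\<forall>A B. A \<in> \<I> \<and> B \<in> \<I> \<longrightarrow> A \<union> B \<in> \<I>)"

definition semi_open_in :: "'a topology \<Rightarrow> 'a set \<Rightarrow> bool" where
  "semi_open_in T A \<longleftrightarrow> (\<exists>U. openin T U \<and> U \<subseteq> A \<and> A \<subseteq> T closure_of U)"

text \<open>Every intersection of open sets (the empty intersection being the whole space) is semi-open.\<close>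
definition semi_Alexandroff :: "'a topology \<Rightarrow> bool" where
  "semi_Alexandroff T \<longleftrightarrow>
     (\<forall>\<F>. (\<forall>U\<in>\<F>. openin T U) \<longrightarrow> semi_open_in T (topspace T \<inter> \<Inter>\<F>))"

definition T_I_space :: "'a topology \<Rightarrow> 'a set set \<Rightarrow> bool" where
  "T_I_space T \<I> \<longleftrightarrow>
     (\<forall>I\<in>\<I>. \<forall>x \<in> topspace T - I. \<exists>A. A \<subseteq> topspace T \<and> x \<in> A \<and> A \<inter> I = {} \<and>
        (openin T A \<or> closedin T A))"

definition tau_boundary :: "'a topology \<Rightarrow> 'a set set \<Rightarrow> bool" where
  "tau_boundary T \<I> \<longleftrightarrow> {U. openin T U} \<inter> \<I> = {{}}"

definition preopen_in :: "'a topology \<Rightarrow> 'a set \<Rightarrow> bool" where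
  "preopen_in T A \<longleftrightarrow> A \<subseteq> topspace T \<and> A \<subseteq> T interior_of (T closure_of A)"

definition completely_codense :: "'a topology \<Rightarrow> 'a set set \<Rightarrow> bool" where
  "completely_codense T \<I> \<longleftrightarrow> {A. preopen_in T A} \<inter> \<I> = {{}}"

end

theory Submission
  imports Defs
begin

theorem mainTheorem1:
  fixes T :: "'a topology" and \<I> :: "'a set set"
  assumes "is_ideal_on T \<I>"
    and "semi_Alexandroff T"
    and "T_I_space T \<I>"
    and "tau_boundary T \<I>"
  shows "completely_codense T \<I>"
proof -
  have sub: "\<And>A B. A \<in> \<I> \<Longrightarrow> B \<subseteq> A \<Longrightarrow> B \<in> \<I>"
    and top: "\<And>A. A \<in> \<I> \<Longrightarrow> A \<subseteq> topspace T" and ne: "\<I> \<noteq> {}"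
    using assms(1) unfolding is_ideal_on_def by blast+
  have emp: "{} \<in> \<I>" using ne sub by blast
  have ob: "\<And>W. openin T W \<Longrightarrow> W \<in> \<I> \<Longrightarrow> W = {}"
    using assms(4) unfolding tau_boundary_def by blast
  have main: "I = {}" if I: "I \<in> \<I>" and pI: "preopen_in T I" for I
  proof -
    define U where "U = T interior_of (T closure_of I)"
    have IU: "I \<subseteq> U" using pI unfolding preopen_in_def U_def by blast
    have Ucl: "U \<subseteq> T closure_of I" unfolding U_def by (rule interior_of_subset)
    have oU: "openin T U" unfolding U_def by simp
    define F where "F = insert U {V. openin T V \<and> I \<subseteq> V}"
    have oF: "\<forall>V\<in>F. openin T V" using oU unfolding F_def by blast
    have eq: "topspace T \<inter> \<Inter>F = I"
    proof
      show "I \<subseteq> topspace T \<inter> \<Inter>F" using IU top[OF I] unfolding F_def by blast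
    next
      show "topspace T \<inter> \<Inter>F \<subseteq> I"
      proof
        fix x assume x: "x \<in> topspace T \<inter> \<Inter>F"
        show "x \<in> I"
        proof (rule ccontr)
          assume nx: "x \<notin> I"
          have xU: "x \<in> U" using x unfolding F_def by blast
          obtain A where A: "A \<subseteq> topspace T" "x \<in> A" "A \<inter> I = {}" "openin T A \<or> closedin T A"
          proof -
            have "x \<in> topspace T - I" using x nx by blast
            with assms(3) I show ?thesis unfolding T_I_space_def by (meson that)
          qed
          show False
          proof (cases "openin T A")
            case True
            have "x \<in> T closure_of I" using xU Ucl by blast
            then have "\<forall>V. x \<in> V \<and> openin T V \<longrightarrow> (\<exists>y. y \<in> I \<and> y \<in> V)"
              by (simp add: in_closure_of)
            then obtain y where "y \<in> I" "y \<in> A" using True A(2) by blast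
            then show False using A(3) by blast
          next
            case False
            then have "closedin T A" using A by blast
            then have "openin T (topspace T - A)" by (simp add: openin_diff)
            moreover have "I \<subseteq> topspace T - A" using A top[OF I] by blast
            ultimately have "topspace T - A \<in> F" unfolding F_def by blast
            then show False using x A by blast
          qed
        qed
      qed
    qed
    have "semi_open_in T (topspace T \<inter> \<Inter>F)" using assms(2) oF unfolding semi_Alexandroff_def by blast
    then have "semi_open_in T I" using eq by simp
    then obtain W where W: "openin T W" "W \<subseteq> I" "I \<subseteq> T closure_of W"
      unfolding semi_open_in_def by blast
    have "W = {}" using ob[OF W(1) sub[OF I W(2)]] .
    then show "I = {}" using W(3) by simp
  qed
  have "preopen_in T {}" unfolding preopen_in_def by simp
  then show ?thesis unfolding completely_codense_def using emp main by blast
qed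

end
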